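(* Assume there exist $\nu>0$ and constants $0<C_1\le C_2$, independent of $m$ and $u$, such that $C_1|m|^{-2\nu}\le|g_m(u)|^2\le C_2|m|^{-2\nu}$ for all $m$ and $u\in[0,1]$. Then the estimator $\widetilde\beta_{j,k,j',k'}$ satisfies $$\mathrm{Var}\big(\widetilde\beta_{j,k,j',k'}\big)\asymp\varepsilon^2\,2^{2j\nu}.$$
   Context: Model: for $\varepsilon>0$ one observes $y(u,t)=\int_0^1 g(u,t-x)f(u,x)\,dx+\varepsilon z(u,t)$, $u,t\in[0,1]$, where $f,g$ are periodic (period 1) in the second argument, $g$ is known, and $z$ is a two-dimensional Gaussian white noise. Let $e_m(t)=e^{i2\pi mt}$ and for a function $w(u,t)$ set $w_m(u)=\int_0^1 w(u,t)\overline{e_m(t)}\,dt$ (applied to $y$ and $g$). Let $\{\psi_{j,k}\}$ be a periodized band-limited (Meyer-type) wavelet basis of $L^2[0,1]$, $\psi_{j,k,m}=\langle e_m,\psi_{j,k}\rangle$, $W_j=\{m:\psi_{j,k,m}\ne0\}$, and let $\{\eta_{j',k'}\}$ be a periodized compactly supported (Daubechies-type) wavelet basis of $L^2[0,1]$. Define $$\widetilde\beta_{j,k,j',k'}=\sum_{m\in W_j}\overline{\psi_{j,k,m}}\int_0^1\frac{y_m(u)}{g_m(u)}\eta_{j',k'}(u)\,du.$$ The notation $a\asymp b$ means $a/b$ is bounded above and below by positive constants independent of $\varepsilon$. *)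

theory Defs
  imports "HOL-Probability.Probability"
begin

definition S01 :: "(real \<times> real) set" where
  "S01 = {0..1} \<times> {0..1}"

definition expo :: "int \<Rightarrow> real \<Rightarrow> complex" where
  "expo m t = cis (2 * pi * real_of_int m * t)"

definition fcoef :: "(real \<Rightarrow> complex) \<Rightarrow> int \<Rightarrow> complex" where
  "fcoef w m = (LINT t:{0..1}|lborel. w t * cnj (expo m t))"

definition gcoef :: "(real \<Rightarrow> real \<Rightarrow> real) \<Rightarrow> int \<Rightarrow> real \<Rightarrow> complex" where
  "gcoef g m u = fcoef (\<lambda>t. complex_of_real (g u t)) m"

definition psi_coef :: "(nat \<Rightarrow> nat \<Rightarrow> real \<Rightarrow> real) \<Rightarrow> nat \<Rightarrow> nat \<Rightarrow> int \<Rightarrow> complex" where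
  "psi_coef \<psi> j k m = (LINT t:{0..1}|lborel. expo m t * cnj (complex_of_real (\<psi> j k t)))"

definition Wset :: "(nat \<Rightarrow> nat \<Rightarrow> real \<Rightarrow> real) \<Rightarrow> nat \<Rightarrow> int set" where
  "Wset \<psi> j = {m. \<exists>k<2^j. psi_coef \<psi> j k m \<noteq> 0}"

definition periodic2 :: "(real \<Rightarrow> real \<Rightarrow> real) \<Rightarrow> bool" where
  "periodic2 w \<longleftrightarrow> (\<forall>u t. w u (t + 1) = w u t)"

definition orthonormal01 :: "(nat \<Rightarrow> nat \<Rightarrow> real \<Rightarrow> real) \<Rightarrow> bool" where
  "orthonormal01 \<psi> \<longleftrightarrow>
     (\<forall>j k. k < 2^j \<longrightarrow> \<psi> j k \<in> borel_measurable borel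
                         \<and> set_integrable lborel {0..1} (\<lambda>t. (\<psi> j k t)^2)) \<and>
     (\<forall>j k j2 k2. k < 2^j \<longrightarrow> k2 < 2^j2 \<longrightarrow>
        (LINT t:{0..1}|lborel. \<psi> j k t * \<psi> j2 k2 t) = (if j = j2 \<and> k = k2 then 1 else 0))"

text \<open>Periodized band-limited (Meyer-type) wavelets: orthonormal, and each psi_{j,k}
  is band-limited, i.e. a trigonometric polynomial whose frequencies lie in the
  Meyer band 2^j/3 \<le> |m| \<le> 2^(j+2)/3 (the image of 2pi/3 \<le> |omega| \<le> 8pi/3).\<close>
definition meyer_type :: "(nat \<Rightarrow> nat \<Rightarrow> real \<Rightarrow> real) \<Rightarrow> bool" where
  "meyer_type \<psi> \<longleftrightarrow> orthonormal01 \<psi> \<and>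
     (\<forall>j k. k < 2^j \<longrightarrow> (\<exists>c :: int \<Rightarrow> complex. \<forall>t.
        complex_of_real (\<psi> j k t) =
          (\<Sum>m\<in>{m::int. 2^j / 3 \<le> \<bar>real_of_int m\<bar> \<and> \<bar>real_of_int m\<bar> \<le> 2^(j+2) / 3}. c m * expo m t)))"

definition daubechies_type :: "(nat \<Rightarrow> nat \<Rightarrow> real \<Rightarrow> real) \<Rightarrow> bool" where
  "daubechies_type \<eta> \<longleftrightarrow> orthonormal01 \<eta> \<and>
     (\<exists>\<eta>0 :: real \<Rightarrow> real. \<eta>0 \<in> borel_measurable borel \<and> bounded (range \<eta>0)
        \<and> bounded {x. \<eta>0 x \<noteq> 0} \<and>
        (\<forall>j k u. \<eta> j k u = 2 powr (real j / 2) *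
                  (\<Sum>\<^sub>\<infinity>l::int. \<eta>0 (2^j * (u + real_of_int l) - real k))))"

text \<open>Two-dimensional Gaussian white noise on [0,1]^2, as an isonormal Gaussian process
  Z indexed by real L^2([0,1]^2): Z h = int int h dz.\<close>
definition white_noise :: "'w measure \<Rightarrow> (((real \<times> real) \<Rightarrow> real) \<Rightarrow> 'w \<Rightarrow> real) \<Rightarrow> bool" where
  "white_noise M Z \<longleftrightarrow> prob_space M \<and>
     (\<forall>h. h \<in> borel_measurable borel \<longrightarrow> set_integrable lborel S01 (\<lambda>p. (h p)^2) \<longrightarrow>
        Z h \<in> borel_measurable M \<and> integrable M (\<lambda>\<omega>. (Z h \<omega>)^2) \<and>
        (LINT \<omega>|M. Z h \<omega>) = 0 \<and>
        ((LINT p:S01|lborel. (h p)^2) > 0 \<longrightarrow>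
           distributed M lborel (Z h)
             (\<lambda>x. ennreal (normal_density 0 (sqrt (LINT p:S01|lborel. (h p)^2)) x)))) \<and>
     (\<forall>h h'. h \<in> borel_measurable borel \<longrightarrow> set_integrable lborel S01 (\<lambda>p. (h p)^2) \<longrightarrow>
        h' \<in> borel_measurable borel \<longrightarrow> set_integrable lborel S01 (\<lambda>p. (h' p)^2) \<longrightarrow>
        (LINT \<omega>|M. Z h \<omega> * Z h' \<omega>) = (LINT p:S01|lborel. h p * h' p) \<and>
        (\<forall>a b. AE \<omega> in M. Z (\<lambda>p. a * h p + b * h' p) \<omega> = a * Z h \<omega> + b * Z h' \<omega>))"

definition wn_int :: "(((real \<times> real) \<Rightarrow> real) \<Rightarrow> 'w \<Rightarrow> real) \<Rightarrow> ((real \<times> real) \<Rightarrow> complex) \<Rightarrow> 'w \<Rightarrow> complex" where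
  "wn_int Z h \<omega> = complex_of_real (Z (\<lambda>p. Re (h p)) \<omega>) + \<i> * complex_of_real (Z (\<lambda>p. Im (h p)) \<omega>)"

definition conv_signal :: "(real \<Rightarrow> real \<Rightarrow> real) \<Rightarrow> (real \<Rightarrow> real \<Rightarrow> real) \<Rightarrow> real \<Rightarrow> real \<Rightarrow> real" where
  "conv_signal g f u t = (LINT x:{0..1}|lborel. g u (t - x) * f u x)"

text \<open>int int h(u,t) dy(u,t) for the observation y = g*f + eps z.\<close>
definition obs_int :: "(real \<Rightarrow> real \<Rightarrow> real) \<Rightarrow> (real \<Rightarrow> real \<Rightarrow> real) \<Rightarrow> real \<Rightarrow>
    (((real \<times> real) \<Rightarrow> real) \<Rightarrow> 'w \<Rightarrow> real) \<Rightarrow> ((real \<times> real) \<Rightarrow> complex) \<Rightarrow> 'w \<Rightarrow> complex" where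
  "obs_int g f \<epsilon> Z h \<omega> =
     (LINT p:S01|lborel. complex_of_real (conv_signal g f (fst p) (snd p)) * h p)
     + complex_of_real \<epsilon> * wn_int Z h \<omega>"

text \<open>The estimator: sum_{m in W_j} conj(psi_{jkm}) int y_m(u) eta_{j'k'}(u) / g_m(u) du,
  where int y_m(u) phi(u) du = int int y(u,t) conj(e_m(t)) phi(u) du dt.\<close>
definition beta_tilde :: "(nat \<Rightarrow> nat \<Rightarrow> real \<Rightarrow> real) \<Rightarrow> (nat \<Rightarrow> nat \<Rightarrow> real \<Rightarrow> real) \<Rightarrow>
    (real \<Rightarrow> real \<Rightarrow> real) \<Rightarrow> (real \<Rightarrow> real \<Rightarrow> real) \<Rightarrow> real \<Rightarrow>
    (((real \<times> real) \<Rightarrow> real) \<Rightarrow> 'w \<Rightarrow> real) \<Rightarrow> nat \<Rightarrow> nat \<Rightarrow> nat \<Rightarrow> nat \<Rightarrow> 'w \<Rightarrow> complex" where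
  "beta_tilde \<psi> \<eta> g f \<epsilon> Z j k j' k' \<omega> =
     (\<Sum>m\<in>Wset \<psi> j. cnj (psi_coef \<psi> j k m) *
        obs_int g f \<epsilon> Z
          (\<lambda>p. cnj (expo m (snd p)) * complex_of_real (\<eta> j' k' (fst p)) / gcoef g m (fst p)) \<omega>)"

definition cvariance :: "'w measure \<Rightarrow> ('w \<Rightarrow> complex) \<Rightarrow> real" where
  "cvariance M X = (LINT \<omega>|M. (cmod (X \<omega> - (LINT \<omega>'|M. X \<omega>')))^2)"

end

theory Submission
  imports Defs
begin

lemma expo_exp: "expo d t = exp (t *\<^sub>R (\<i> * complex_of_real (2*pi*real_of_int d)))"
  unfolding expo_def cis_conv_exp by (simp add: scaleR_conv_of_real mult_ac)

lemma expo_has_integral: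
  "(expo d has_integral (if d = 0 then 1 else 0)) {0..1}"
proof (cases "d = 0")
  case True
  then show ?thesis unfolding expo_def
    using has_integral_const_real[of "1::complex" 0 1] by simp
next
  case False
  define c where "c = \<i> * complex_of_real (2*pi*real_of_int d)"
  have c0: "c \<noteq> 0" using False by (simp add: c_def)
  have "((\<lambda>t. exp (t *\<^sub>R c) * c) has_integral (exp (1 *\<^sub>R c) - exp (0 *\<^sub>R c))) {0..1}"
    by (rule fundamental_theorem_of_calculus) (auto intro: exp_scaleR_has_vector_derivative_right)
  moreover have "exp (1 *\<^sub>R c) = 1"
  proof -
    have "exp (1 *\<^sub>R c) = cis (2*pi*real_of_int d)" by (simp add: c_def cis_conv_exp mult_ac)
    also have "\<dots> = 1" by (rule cis_multiple_2pi) simp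
    finally show ?thesis .
  qed
  ultimately have "((\<lambda>t. exp (t *\<^sub>R c) * c) has_integral 0) {0..1}" by simp
  then have "((\<lambda>t. exp (t *\<^sub>R c) * c * inverse c) has_integral 0 * inverse c) {0..1}"
    by (rule has_integral_mult_left)
  moreover have "(\<lambda>t. exp (t *\<^sub>R c) * c * inverse c) = expo d"
  proof
    fix t
    have "exp (t *\<^sub>R c) * c * inverse c = exp (t *\<^sub>R c)" using c0 by simp
    also have "\<dots> = expo d t" unfolding expo_exp c_def ..
    finally show "exp (t *\<^sub>R c) * c * inverse c = expo d t" .
  qed
  ultimately show ?thesis using False by simp
qed

lemma continuous_expo[continuous_intros]: "continuous_on S (expo m)"
  unfolding expo_def by (intro continuous_intros)

lemma expo_mult_cnj: "expo m t * cnj (expo n t) = expo (m - n) t"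
  unfolding expo_def by (simp add: cis_cnj cis_mult algebra_simps)

lemma integral_expo_orth:
  "integral {0..1} (\<lambda>t. expo m t * cnj (expo n t)) = (if m = n then 1 else 0)"
  unfolding expo_mult_cnj using expo_has_integral[of "m - n"] integral_unique by auto

lemma integrable_on_expo_prod: "(\<lambda>t. expo m t * cnj (expo n t)) integrable_on {0..1}"
  unfolding expo_mult_cnj using expo_has_integral by blast

lemma parseval_H:
  assumes "finite B"
  shows "integral {0..1} (\<lambda>t. (\<Sum>m\<in>B. d m * expo m t) * cnj (\<Sum>m\<in>B. d m * expo m t))
        = complex_of_real (\<Sum>m\<in>B. (cmod (d m))^2)"
proof -
  have eq: "(\<lambda>t. (\<Sum>m\<in>B. d m * expo m t) * cnj (\<Sum>m\<in>B. d m * expo m t))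
     = (\<lambda>t. \<Sum>m\<in>B. \<Sum>n\<in>B. (d m * cnj (d n)) * (expo m t * cnj (expo n t)))"
    by (rule ext) (simp add: sum_product cnj_sum mult_ac)
  have "integral {0..1} (\<lambda>t. \<Sum>m\<in>B. \<Sum>n\<in>B. (d m * cnj (d n)) * (expo m t * cnj (expo n t)))
     = (\<Sum>m\<in>B. \<Sum>n\<in>B. (d m * cnj (d n)) * integral {0..1} (\<lambda>t. expo m t * cnj (expo n t)))"
  proof -
    have "integral {0..1} (\<lambda>t. \<Sum>m\<in>B. \<Sum>n\<in>B. (d m * cnj (d n)) * (expo m t * cnj (expo n t)))
       = (\<Sum>m\<in>B. integral {0..1} (\<lambda>t. \<Sum>n\<in>B. (d m * cnj (d n)) * (expo m t * cnj (expo n t))))"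
      by (rule integral_sum[OF assms]) (intro integrable_sum assms integrable_on_mult_right integrable_on_expo_prod)
    also have "\<dots> = (\<Sum>m\<in>B. \<Sum>n\<in>B. integral {0..1} (\<lambda>t. (d m * cnj (d n)) * (expo m t * cnj (expo n t))))"
      by (intro sum.cong refl integral_sum assms integrable_on_mult_right integrable_on_expo_prod)
    also have "\<dots> = (\<Sum>m\<in>B. \<Sum>n\<in>B. (d m * cnj (d n)) * integral {0..1} (\<lambda>t. expo m t * cnj (expo n t)))"
      by (intro sum.cong refl integral_mult_right)
    finally show ?thesis .
  qed
  also have "\<dots> = (\<Sum>m\<in>B. d m * cnj (d m))"
    using assms by (simp add: integral_expo_orth if_distrib sum.delta cong: if_cong)
  also have "\<dots> = complex_of_real (\<Sum>m\<in>B. (cmod (d m))^2)"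
    by (simp only: of_real_sum complex_norm_square)
  finally show ?thesis unfolding eq .
qed

lemma parseval:
  assumes "finite B"
  shows "(LINT t:{0..1}|lborel. (cmod (\<Sum>m\<in>B. d m * expo m t))^2) = (\<Sum>m\<in>B. (cmod (d m))^2)"
proof -
  let ?S = "\<lambda>t. \<Sum>m\<in>B. d m * expo m t"
  have cont: "continuous_on {0..1} (\<lambda>t. ?S t * cnj (?S t))"
    by (intro continuous_intros)
  have "complex_of_real (LINT t:{0..1}|lborel. (cmod (?S t))^2)
      = (LINT t:{0..1}|lborel. complex_of_real ((cmod (?S t))^2))"
    by (rule set_integral_complex_of_real[symmetric])
  also have "\<dots> = (LINT t:{0..1}|lborel. ?S t * cnj (?S t))"
    by (simp only: complex_norm_square)
  also have "\<dots> = integral {0..1} (\<lambda>t. ?S t * cnj (?S t))"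
    by (rule set_borel_integral_eq_integral(2))
       (use borel_integrable_compact[OF compact_Icc cont] in \<open>simp add: set_integrable_def\<close>)
  also have "\<dots> = complex_of_real (\<Sum>m\<in>B. (cmod (d m))^2)"
    by (rule parseval_H[OF assms])
  finally show ?thesis by (simp only: of_real_eq_iff)
qed

definition band :: "nat \<Rightarrow> int set" where
  "band j = {m::int. 2^j / 3 \<le> \<bar>real_of_int m\<bar> \<and> \<bar>real_of_int m\<bar> \<le> 2^(j+2) / 3}"

lemma finite_band: "finite (band j)"
proof -
  have "band j \<subseteq> {- \<lceil>2^(j+2)/3::real\<rceil> .. \<lceil>2^(j+2)/3::real\<rceil>}"
    unfolding band_def by (auto simp: abs_le_iff ceiling_le_iff le_ceiling_iff) linarith+
  then show ?thesis by (rule finite_subset) simp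
qed

lemma LINT_cont_eq_integral:
  assumes "continuous_on {0..1::real} (f :: real \<Rightarrow> complex)"
  shows "(LINT t:{0..1}|lborel. f t) = integral {0..1} f"
  by (rule set_borel_integral_eq_integral(2))
     (use borel_integrable_compact[OF compact_Icc assms] in \<open>simp add: set_integrable_def\<close>)

lemma integral_expo_sum:
  assumes "finite B"
  shows "integral {0..1} (\<lambda>t. expo m t * cnj (\<Sum>n\<in>B. c n * expo n t)) = (if m \<in> B then cnj (c m) else 0)"
proof -
  have "integral {0..1} (\<lambda>t. expo m t * cnj (\<Sum>n\<in>B. c n * expo n t))
      = integral {0..1} (\<lambda>t. \<Sum>n\<in>B. cnj (c n) * (expo m t * cnj (expo n t)))"
    by (simp add: cnj_sum sum_distrib_left mult_ac)
  also have "\<dots> = (\<Sum>n\<in>B. integral {0..1} (\<lambda>t. cnj (c n) * (expo m t * cnj (expo n t))))"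
    by (rule integral_sum[OF assms]) (intro integrable_on_mult_right integrable_on_expo_prod)
  also have "\<dots> = (\<Sum>n\<in>B. cnj (c n) * (if m = n then 1 else 0))"
    by (intro sum.cong refl) (simp only: integral_mult_right integral_expo_orth)
  also have "\<dots> = (if m \<in> B then cnj (c m) else 0)"
    using assms by (simp add: if_distrib sum.delta cong: if_cong)
  finally show ?thesis .
qed

lemma psi_facts:
  assumes psi: "meyer_type \<psi>" and k: "k < 2^j"
  shows "Wset \<psi> j \<subseteq> band j" "finite (Wset \<psi> j)"
    "(\<Sum>m\<in>Wset \<psi> j. (cmod (psi_coef \<psi> j k m))^2) = 1"
proof -
  have coef: "\<And>k. k < 2^j \<Longrightarrow> \<exists>c. (\<forall>m. psi_coef \<psi> j k m = (if m \<in> band j then cnj (c m) else 0))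
       \<and> (LINT t:{0..1}|lborel. (\<psi> j k t)^2) = (\<Sum>m\<in>band j. (cmod (c m))^2)"
  proof -
    fix k :: nat assume k: "k < 2^j"
    from psi k obtain c where c: "\<And>t. complex_of_real (\<psi> j k t) = (\<Sum>m\<in>band j. c m * expo m t)"
      unfolding meyer_type_def band_def by blast
    have "\<forall>m. psi_coef \<psi> j k m = (if m \<in> band j then cnj (c m) else 0)"
    proof
      fix m
      have "psi_coef \<psi> j k m = (LINT t:{0..1}|lborel. expo m t * cnj (\<Sum>n\<in>band j. c n * expo n t))"
        unfolding psi_coef_def c ..
      also have "\<dots> = integral {0..1} (\<lambda>t. expo m t * cnj (\<Sum>n\<in>band j. c n * expo n t))"
        by (rule LINT_cont_eq_integral) (intro continuous_intros)
      also have "\<dots> = (if m \<in> band j then cnj (c m) else 0)"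
        by (rule integral_expo_sum[OF finite_band])
      finally show "psi_coef \<psi> j k m = (if m \<in> band j then cnj (c m) else 0)" .
    qed
    moreover have "(LINT t:{0..1}|lborel. (\<psi> j k t)^2) = (\<Sum>m\<in>band j. (cmod (c m))^2)"
    proof -
      have "(LINT t:{0..1}|lborel. (\<psi> j k t)^2) = (LINT t:{0..1}|lborel. (cmod (\<Sum>m\<in>band j. c m * expo m t))^2)"
        unfolding c[symmetric] by simp
      also have "\<dots> = (\<Sum>m\<in>band j. (cmod (c m))^2)" by (rule parseval[OF finite_band])
      finally show ?thesis .
    qed
    ultimately show "\<exists>c. (\<forall>m. psi_coef \<psi> j k m = (if m \<in> band j then cnj (c m) else 0))
       \<and> (LINT t:{0..1}|lborel. (\<psi> j k t)^2) = (\<Sum>m\<in>band j. (cmod (c m))^2)" by blast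
  qed
  show sub: "Wset \<psi> j \<subseteq> band j"
  proof
    fix m assume "m \<in> Wset \<psi> j"
    then obtain k' where "k' < 2^j" "psi_coef \<psi> j k' m \<noteq> 0" unfolding Wset_def by auto
    with coef[of k'] show "m \<in> band j" by (auto split: if_splits)
  qed
  then show fin: "finite (Wset \<psi> j)" using finite_subset finite_band by blast
  from coef[OF k] obtain c where c1: "\<And>m. psi_coef \<psi> j k m = (if m \<in> band j then cnj (c m) else 0)"
    and c2: "(LINT t:{0..1}|lborel. (\<psi> j k t)^2) = (\<Sum>m\<in>band j. (cmod (c m))^2)" by blast
  have one: "(LINT t:{0..1}|lborel. (\<psi> j k t)^2) = 1"
    using psi k unfolding meyer_type_def orthonormal01_def by (auto simp: power2_eq_square)
  have "(\<Sum>m\<in>Wset \<psi> j. (cmod (psi_coef \<psi> j k m))^2) = (\<Sum>m\<in>band j. (cmod (psi_coef \<psi> j k m))^2)"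
  proof (rule sum.mono_neutral_left[OF finite_band sub])
    show "\<forall>m\<in>band j - Wset \<psi> j. (cmod (psi_coef \<psi> j k m))^2 = 0"
      using k unfolding Wset_def by auto
  qed
  also have "\<dots> = (\<Sum>m\<in>band j. (cmod (c m))^2)" by (intro sum.cong refl) (simp add: c1)
  finally show "(\<Sum>m\<in>Wset \<psi> j. (cmod (psi_coef \<psi> j k m))^2) = 1" using c2 one by simp
qed

lemma borel_measurable_expo[measurable]: "expo m \<in> borel_measurable borel"
  by (intro borel_measurable_continuous_onI continuous_expo)

lemma sets_borel_lborel_pair: "sets (borel \<Otimes>\<^sub>M lborel) = sets (borel :: (real \<times> real) measure)"
proof -
  have "sets (borel \<Otimes>\<^sub>M lborel) = sets (borel \<Otimes>\<^sub>M (borel :: real measure))"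
    by (rule sets_pair_measure_cong) simp_all
  also have "\<dots> = sets (borel :: (real \<times> real) measure)" by (simp only: borel_prod)
  finally show ?thesis .
qed

lemma gcoef_measurable:
  assumes g_meas: "(\<lambda>p. g (fst p) (snd p)) \<in> borel_measurable borel"
  shows "(\<lambda>u. gcoef g m u) \<in> borel_measurable borel"
proof -
  let ?f = "\<lambda>u t. indicator {0..1::real} t *\<^sub>R (complex_of_real (g u t) * cnj (expo m t))"
  have [measurable]: "(\<lambda>t. cnj (expo m t)) \<in> borel_measurable borel"
    by (intro borel_measurable_continuous_onI continuous_intros)
  have gm[measurable]: "(\<lambda>p. g (fst p) (snd p)) \<in> borel_measurable (borel \<Otimes>\<^sub>M borel)"
    using g_meas by (simp only: borel_prod)
  have "(\<lambda>p::real\<times>real. ?f (fst p) (snd p)) \<in> borel_measurable (borel \<Otimes>\<^sub>M borel)"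
    by measurable
  then have "case_prod ?f \<in> borel_measurable (borel \<Otimes>\<^sub>M lborel)"
    by (subst measurable_cong_sets[OF sets_pair_measure_cong[OF refl sets_lborel] refl]) (simp add: case_prod_beta')
  then have "(\<lambda>u. \<integral>t. ?f u t \<partial>lborel) \<in> borel_measurable borel"
    by (rule lborel.borel_measurable_lebesgue_integral)
  then show ?thesis unfolding gcoef_def fcoef_def set_lebesgue_integral_def .
qed

lemma prodint:
  fixes F :: "real \<Rightarrow> real"
  assumes Fm: "F \<in> borel_measurable borel" and Fi: "set_integrable lborel {0..1} F"
  shows "integrable lborel (\<lambda>p::real\<times>real. indicator S01 p * F (fst p))"
proof -
  have PS: "pair_sigma_finite (lborel :: real measure) (lborel :: real measure)"
    by (simp add: pair_sigma_finite_def lborel.sigma_finite_measure_axioms)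
  let ?f = "\<lambda>p::real\<times>real. indicator S01 p * F (fst p)"
  have ind: "\<And>p. indicator S01 p = indicator {0..1::real} (fst p) * (indicator {0..1::real} (snd p) :: real)"
    unfolding S01_def by (auto split: split_indicator simp: mem_Times_iff)
  have meas: "?f \<in> borel_measurable (lborel \<Otimes>\<^sub>M lborel)"
    unfolding ind
    by (subst measurable_cong_sets[OF sets_pair_measure_cong[OF sets_lborel sets_lborel] refl]) (use Fm in measurable)
  have int1: "\<And>x. (\<integral>y. norm (?f (x, y)) \<partial>lborel) = norm (indicator {0..1} x * F x)"
    by (simp add: ind abs_mult)
  have "integrable (lborel \<Otimes>\<^sub>M lborel) ?f"
  proof (rule pair_sigma_finite.Fubini_integrable[OF PS meas])
    show "integrable lborel (\<lambda>x. \<integral>y. norm (?f (x, y)) \<partial>lborel)"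
      unfolding int1 using Fi unfolding set_integrable_def by simp
    show "AE x in lborel. integrable lborel (\<lambda>y. ?f (x, y))"
      by (simp add: ind)
  qed
  then show ?thesis by (simp add: lborel_prod)
qed

lemma S01_borel[measurable]: "S01 \<in> sets borel"
  unfolding S01_def by (intro borel_closed closed_Times) auto

lemma sq_bound_int:
  fixes f :: "real \<times> real \<Rightarrow> 'b::{banach, second_countable_topology}"
  assumes em: "e \<in> borel_measurable borel" and ei: "set_integrable lborel {0..1} (\<lambda>u. (e u)^2)"
    and fm: "f \<in> borel_measurable borel"
    and fb: "\<And>p. p \<in> S01 \<Longrightarrow> norm (f p) \<le> B * (e (fst p))^2"
  shows "set_integrable lborel S01 f"
proof -
  have dom: "integrable lborel (\<lambda>p::real\<times>real. indicator S01 p * (B * (e (fst p))^2))"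
    by (rule prodint) (use em ei in auto)
  show ?thesis unfolding set_integrable_def
  proof (rule Bochner_Integration.integrable_bound[OF dom])
    show "(\<lambda>x. indicator S01 x *\<^sub>R f x) \<in> borel_measurable lborel" using fm by simp measurable
    show "AE x in lborel. norm (indicator S01 x *\<^sub>R f x) \<le> norm (indicator S01 x * (B * (e (fst x))\<^sup>2))"
    proof (rule AE_I2)
      fix x :: "real \<times> real"
      show "norm (indicator S01 x *\<^sub>R f x) \<le> norm (indicator S01 x * (B * (e (fst x))\<^sup>2))"
      proof (cases "x \<in> S01")
        case True
        then show ?thesis using fb[OF True] by simp
      qed simp
    qed
  qed
qed

definition valid :: "((real \<times> real) \<Rightarrow> real) \<Rightarrow> bool" where
  "valid h \<longleftrightarrow> h \<in> borel_measurable borel \<and> set_integrable lborel S01 (\<lambda>p. (h p)^2)"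

lemma valid_zero: "valid (\<lambda>p. 0)"
  unfolding valid_def set_integrable_def by simp

lemma valid_lin:
  assumes "valid f" "valid g"
  shows "valid (\<lambda>p. a * f p + b * g p)"
proof -
  have fm: "f \<in> borel_measurable borel" and gm: "g \<in> borel_measurable borel"
    and fi: "set_integrable lborel S01 (\<lambda>p. (f p)^2)" and gi: "set_integrable lborel S01 (\<lambda>p. (g p)^2)"
    using assms unfolding valid_def by auto
  have "set_integrable lborel S01 (\<lambda>p. 2 * a^2 * (f p)^2 + 2 * b^2 * (g p)^2)"
    using fi gi by (intro set_integral_add set_integrable_mult_right) auto
  then have dom: "integrable lborel (\<lambda>p. indicator S01 p *\<^sub>R (2 * a^2 * (f p)^2 + 2 * b^2 * (g p)^2))"
    unfolding set_integrable_def .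
  have "integrable lborel (\<lambda>p. indicator S01 p *\<^sub>R (a * f p + b * g p)^2)"
  proof (rule Bochner_Integration.integrable_bound[OF dom])
    show "(\<lambda>p. indicator S01 p *\<^sub>R (a * f p + b * g p)^2) \<in> borel_measurable lborel"
      using fm gm by simp measurable
    have "\<And>p. (a * f p + b * g p)^2 \<le> 2 * a^2 * (f p)^2 + 2 * b^2 * (g p)^2"
    proof -
      fix p
      have "0 \<le> (a * f p - b * g p)^2" by simp
      then show "(a * f p + b * g p)^2 \<le> 2 * a^2 * (f p)^2 + 2 * b^2 * (g p)^2"
        by (simp add: power2_eq_square algebra_simps)
    qed
    then show "AE p in lborel. norm (indicator S01 p *\<^sub>R (a * f p + b * g p)^2)
        \<le> norm (indicator S01 p *\<^sub>R (2 * a^2 * (f p)^2 + 2 * b^2 * (g p)^2))"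
      by (auto split: split_indicator intro: order_trans[OF _ abs_ge_self])
  qed
  then show ?thesis unfolding valid_def set_integrable_def using fm gm by simp
qed

lemma valid_sum:
  assumes "finite F" "\<And>n. n \<in> F \<Longrightarrow> valid (\<phi> n)"
  shows "valid (\<lambda>p. \<Sum>n\<in>F. \<phi> n p)"
  using assms
proof (induction F rule: finite_induct)
  case empty then show ?case by (simp add: valid_zero)
next
  case (insert x F)
  have "valid (\<lambda>p. 1 * \<phi> x p + 1 * (\<Sum>n\<in>F. \<phi> n p))"
    by (rule valid_lin) (use insert in auto)
  then show ?case using insert by simp
qed

lemma wn_facts:
  assumes wn: "white_noise M Z" and v: "valid h"
  shows "prob_space M" "Z h \<in> borel_measurable M" "integrable M (\<lambda>\<omega>. (Z h \<omega>)^2)"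
    "integrable M (Z h)" "(LINT \<omega>|M. Z h \<omega>) = 0"
    "(LINT \<omega>|M. (Z h \<omega>)^2) = (LINT p:S01|lborel. (h p)^2)"
proof -
  show P: "prob_space M" using wn unfolding white_noise_def by auto
  then interpret prob_space M .
  show m: "Z h \<in> borel_measurable M" "integrable M (\<lambda>\<omega>. (Z h \<omega>)^2)" "(LINT \<omega>|M. Z h \<omega>) = 0"
    using wn v unfolding white_noise_def valid_def by auto
  show "integrable M (Z h)" by (rule square_integrable_imp_integrable) (use m in auto)
  show "(LINT \<omega>|M. (Z h \<omega>)^2) = (LINT p:S01|lborel. (h p)^2)"
    using wn v unfolding white_noise_def valid_def by (auto simp: power2_eq_square)
qed

lemma wn_lin_sum:
  assumes wn: "white_noise M Z" and "finite F" and "\<And>n. n \<in> F \<Longrightarrow> valid (\<phi> n)"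
  shows "AE \<omega> in M. Z (\<lambda>p. \<Sum>n\<in>F. \<phi> n p) \<omega> = (\<Sum>n\<in>F. Z (\<phi> n) \<omega>)"
  using assms(2,3)
proof (induction F rule: finite_induct)
  case empty
  have "AE \<omega> in M. Z (\<lambda>p. 0 * 0 + 0 * 0) \<omega> = 0 * Z (\<lambda>p. 0) \<omega> + 0 * Z (\<lambda>p. 0) \<omega>"
    using wn valid_zero unfolding white_noise_def valid_def by blast
  then show ?case by simp
next
  case (insert x F)
  have vS: "valid (\<lambda>p. \<Sum>n\<in>F. \<phi> n p)" by (rule valid_sum) (use insert in auto)
  have vx: "valid (\<phi> x)" using insert by auto
  have "AE \<omega> in M. Z (\<lambda>p. 1 * \<phi> x p + 1 * (\<Sum>n\<in>F. \<phi> n p)) \<omega>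
      = 1 * Z (\<phi> x) \<omega> + 1 * Z (\<lambda>p. \<Sum>n\<in>F. \<phi> n p) \<omega>"
    using wn vS vx unfolding white_noise_def valid_def by blast
  moreover have "AE \<omega> in M. Z (\<lambda>p. \<Sum>n\<in>F. \<phi> n p) \<omega> = (\<Sum>n\<in>F. Z (\<phi> n) \<omega>)"
    using insert by auto
  ultimately show ?case by eventually_elim (simp add: insert.hyps)
qed

lemma sum_complex_split:
  "(\<Sum>m\<in>W. a m * (complex_of_real (x m) + \<i> * complex_of_real (y m)))
   = complex_of_real (\<Sum>m\<in>W. Re (a m) * x m + (- Im (a m)) * y m)
     + \<i> * complex_of_real (\<Sum>m\<in>W. Im (a m) * x m + Re (a m) * y m)"
  by (simp add: complex_eq_iff Re_sum Im_sum) (simp add: add.commute)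

lemma var_core:
  fixes M :: "'w measure" and h :: "int \<Rightarrow> real \<times> real \<Rightarrow> complex"
  assumes wn: "white_noise M Z" and W: "finite W"
    and vR: "\<And>m. m \<in> W \<Longrightarrow> valid (\<lambda>p. Re (h m p))"
    and vI: "\<And>m. m \<in> W \<Longrightarrow> valid (\<lambda>p. Im (h m p))"
    and X: "\<And>\<omega>. X \<omega> = (\<Sum>m\<in>W. a m * (C m + complex_of_real \<epsilon> * wn_int Z (h m) \<omega>))"
  shows "cvariance M X = \<epsilon>^2 * (LINT p:S01|lborel. (cmod (\<Sum>m\<in>W. a m * h m p))^2)"
proof -
  have P: "prob_space M" using wn unfolding white_noise_def by auto
  then interpret prob_space M .
  define R where "R m = (\<lambda>p. Re (h m p))" for m
  define I where "I m = (\<lambda>p. Im (h m p))" for m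
  define \<phi>r where "\<phi>r m = (\<lambda>p. Re (a m) * R m p + (- Im (a m)) * I m p)" for m
  define \<phi>i where "\<phi>i m = (\<lambda>p. Im (a m) * R m p + Re (a m) * I m p)" for m
  define HR where "HR = (\<lambda>p. \<Sum>m\<in>W. \<phi>r m p)"
  define HI where "HI = (\<lambda>p. \<Sum>m\<in>W. \<phi>i m p)"
  define C0 where "C0 = (\<Sum>m\<in>W. a m * C m)"
  have vR': "\<And>m. m \<in> W \<Longrightarrow> valid (R m)" and vI': "\<And>m. m \<in> W \<Longrightarrow> valid (I m)"
    using vR vI by (simp_all add: R_def I_def)
  have vr: "\<And>m. m \<in> W \<Longrightarrow> valid (\<phi>r m)" unfolding \<phi>r_def by (intro valid_lin vR' vI')
  have vi: "\<And>m. m \<in> W \<Longrightarrow> valid (\<phi>i m)" unfolding \<phi>i_def by (intro valid_lin vR' vI')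
  have vHR: "valid HR" unfolding HR_def by (intro valid_sum W vr)
  have vHI: "valid HI" unfolding HI_def by (intro valid_sum W vi)
  have mR: "\<And>m. m \<in> W \<Longrightarrow> Z (R m) \<in> borel_measurable M" using wn_facts(2)[OF wn vR'] .
  have mI: "\<And>m. m \<in> W \<Longrightarrow> Z (I m) \<in> borel_measurable M" using wn_facts(2)[OF wn vI'] .
  note fHR = wn_facts[OF wn vHR] and fHI = wn_facts[OF wn vHI]
  note [measurable] = fHR(2) fHI(2)
  have linr: "AE \<omega> in M. \<forall>m\<in>W. Z (\<phi>r m) \<omega> = Re (a m) * Z (R m) \<omega> + (- Im (a m)) * Z (I m) \<omega>"
    using wn vR' vI' unfolding white_noise_def valid_def \<phi>r_def
    by (intro AE_finite_allI W) blast
  have lini: "AE \<omega> in M. \<forall>m\<in>W. Z (\<phi>i m) \<omega> = Im (a m) * Z (R m) \<omega> + Re (a m) * Z (I m) \<omega>"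
    using wn vR' vI' unfolding white_noise_def valid_def \<phi>i_def
    by (intro AE_finite_allI W) blast
  have sr: "AE \<omega> in M. Z HR \<omega> = (\<Sum>m\<in>W. Z (\<phi>r m) \<omega>)"
    unfolding HR_def by (rule wn_lin_sum[OF wn W vr])
  have si: "AE \<omega> in M. Z HI \<omega> = (\<Sum>m\<in>W. Z (\<phi>i m) \<omega>)"
    unfolding HI_def by (rule wn_lin_sum[OF wn W vi])
  have Xeq: "\<And>\<omega>. X \<omega> = C0 + complex_of_real \<epsilon> *
      (complex_of_real (\<Sum>m\<in>W. Re (a m) * Z (R m) \<omega> + (- Im (a m)) * Z (I m) \<omega>)
     + \<i> * complex_of_real (\<Sum>m\<in>W. Im (a m) * Z (R m) \<omega> + Re (a m) * Z (I m) \<omega>))"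
  proof -
    fix \<omega>
    have "X \<omega> = C0 + complex_of_real \<epsilon> * (\<Sum>m\<in>W. a m * (complex_of_real (Z (R m) \<omega>) + \<i> * complex_of_real (Z (I m) \<omega>)))"
      unfolding X C0_def wn_int_def R_def I_def
      by (simp add: distrib_left sum.distrib sum_distrib_left mult_ac)
    then show "?thesis \<omega>" by (simp only: sum_complex_split)
  qed
  define Y where "Y \<omega> = C0 + complex_of_real \<epsilon> * (complex_of_real (Z HR \<omega>) + \<i> * complex_of_real (Z HI \<omega>))" for \<omega>
  have XY: "AE \<omega> in M. X \<omega> = Y \<omega>"
    using linr lini sr si
  proof eventually_elim
    case (elim \<omega>)
    have "(\<Sum>m\<in>W. Z (\<phi>r m) \<omega>) = (\<Sum>m\<in>W. Re (a m) * Z (R m) \<omega> + (- Im (a m)) * Z (I m) \<omega>)"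
      using elim(1) by (intro sum.cong) auto
    moreover have "(\<Sum>m\<in>W. Z (\<phi>i m) \<omega>) = (\<Sum>m\<in>W. Im (a m) * Z (R m) \<omega> + Re (a m) * Z (I m) \<omega>)"
      using elim(2) by (intro sum.cong) auto
    ultimately show ?case unfolding Xeq Y_def using elim(3,4) by simp
  qed
  have Xm: "X \<in> borel_measurable M"
  proof -
    have "(\<lambda>\<omega>. C0 + complex_of_real \<epsilon> *
      (complex_of_real (\<Sum>m\<in>W. Re (a m) * Z (R m) \<omega> + (- Im (a m)) * Z (I m) \<omega>)
     + \<i> * complex_of_real (\<Sum>m\<in>W. Im (a m) * Z (R m) \<omega> + Re (a m) * Z (I m) \<omega>))) \<in> borel_measurable M"
    proof -
      have s1: "(\<lambda>\<omega>. \<Sum>m\<in>W. Re (a m) * Z (R m) \<omega> + (- Im (a m)) * Z (I m) \<omega>) \<in> borel_measurable M"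
      proof (rule borel_measurable_sum)
        fix m assume m: "m \<in> W"
        note [measurable] = mR[OF m] mI[OF m]
        show "(\<lambda>\<omega>. Re (a m) * Z (R m) \<omega> + (- Im (a m)) * Z (I m) \<omega>) \<in> borel_measurable M" by measurable
      qed
      have s2: "(\<lambda>\<omega>. \<Sum>m\<in>W. Im (a m) * Z (R m) \<omega> + Re (a m) * Z (I m) \<omega>) \<in> borel_measurable M"
      proof (rule borel_measurable_sum)
        fix m assume m: "m \<in> W"
        note [measurable] = mR[OF m] mI[OF m]
        show "(\<lambda>\<omega>. Im (a m) * Z (R m) \<omega> + Re (a m) * Z (I m) \<omega>) \<in> borel_measurable M" by measurable
      qed
      show ?thesis using s1 s2 by measurable
    qed
    then show ?thesis unfolding Xeq[abs_def] .
  qed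
  have Ym: "Y \<in> borel_measurable M" unfolding Y_def by measurable
  have intHR: "integrable M (Z HR)" and intHI: "integrable M (Z HI)" using fHR(4) fHI(4) .
  have EY: "(LINT \<omega>|M. Y \<omega>) = C0"
  proof -
    have "(LINT \<omega>|M. Y \<omega>) = (LINT \<omega>|M. C0 + (complex_of_real \<epsilon> * complex_of_real (Z HR \<omega>)
        + (complex_of_real \<epsilon> * \<i>) * complex_of_real (Z HI \<omega>)))"
      unfolding Y_def by (simp add: algebra_simps)
    also have "\<dots> = C0 + (complex_of_real \<epsilon> * complex_of_real (LINT \<omega>|M. Z HR \<omega>)
        + (complex_of_real \<epsilon> * \<i>) * complex_of_real (LINT \<omega>|M. Z HI \<omega>))"
      using intHR intHI by (simp add: integral_add integral_mult_right_zero prob_space)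
    also have "\<dots> = C0" using fHR(5) fHI(5) by simp
    finally show ?thesis .
  qed
  have EX: "(LINT \<omega>|M. X \<omega>) = C0"
    using integral_cong_AE[OF Xm Ym XY] EY by simp
  have "cvariance M X = (LINT \<omega>|M. \<epsilon>^2 * ((Z HR \<omega>)^2 + (Z HI \<omega>)^2))"
    unfolding cvariance_def EX
  proof (rule integral_cong_AE)
    show "(\<lambda>\<omega>. (cmod (X \<omega> - C0))^2) \<in> borel_measurable M" using Xm by measurable
    show "(\<lambda>\<omega>. \<epsilon>^2 * ((Z HR \<omega>)^2 + (Z HI \<omega>)^2)) \<in> borel_measurable M" by measurable
    show "AE \<omega> in M. (cmod (X \<omega> - C0))^2 = \<epsilon>^2 * ((Z HR \<omega>)^2 + (Z HI \<omega>)^2)"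
      using XY
    proof eventually_elim
      case (elim \<omega>)
      show ?case unfolding elim Y_def
        by (simp add: cmod_power2 power_mult_distrib algebra_simps)
    qed
  qed
  also have "\<dots> = \<epsilon>^2 * ((LINT \<omega>|M. (Z HR \<omega>)^2) + (LINT \<omega>|M. (Z HI \<omega>)^2))"
    using fHR(3) fHI(3) by simp
  also have "\<dots> = \<epsilon>^2 * ((LINT p:S01|lborel. (HR p)^2) + (LINT p:S01|lborel. (HI p)^2))"
    using fHR(6) fHI(6) by simp
  also have "(LINT p:S01|lborel. (HR p)^2) + (LINT p:S01|lborel. (HI p)^2)
      = (LINT p:S01|lborel. (HR p)^2 + (HI p)^2)"
    using vHR vHI unfolding valid_def by (simp add: set_integral_add)
  also have "\<dots> = (LINT p:S01|lborel. (cmod (\<Sum>m\<in>W. a m * h m p))^2)"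
  proof -
    have "\<And>p. (HR p)^2 + (HI p)^2 = (cmod (\<Sum>m\<in>W. a m * h m p))^2"
      unfolding HR_def HI_def \<phi>r_def \<phi>i_def R_def I_def cmod_power2
      by (simp add: Re_sum Im_sum algebra_simps)
    then show ?thesis by simp
  qed
  finally show ?thesis .
qed

lemma hm_measurable:
  assumes em: "e \<in> borel_measurable borel" and Gm: "G \<in> borel_measurable borel"
  shows "(\<lambda>p::real\<times>real. cnj (expo m (snd p)) * complex_of_real (e (fst p)) / G (fst p)) \<in> borel_measurable borel"
proof -
  have [measurable]: "(\<lambda>t. cnj (expo m t)) \<in> borel_measurable borel"
    by (intro borel_measurable_continuous_onI continuous_intros)
  note [measurable] = em Gm
  have "(\<lambda>p::real\<times>real. cnj (expo m (snd p)) * complex_of_real (e (fst p)) / G (fst p)) \<in> borel_measurable (borel \<Otimes>\<^sub>M borel)"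
    by measurable
  then show ?thesis by (simp only: borel_prod)
qed

lemma hm_valid:
  assumes em: "e \<in> borel_measurable borel" and ei: "set_integrable lborel {0..1} (\<lambda>u. (e u)^2)"
    and Gm: "G \<in> borel_measurable borel"
    and Gb: "\<And>u. u \<in> {0..1} \<Longrightarrow> K \<le> (cmod (G u))^2" and K: "0 < K"
  shows "valid (\<lambda>p. Re (cnj (expo m (snd p)) * complex_of_real (e (fst p)) / G (fst p)))"
    "valid (\<lambda>p. Im (cnj (expo m (snd p)) * complex_of_real (e (fst p)) / G (fst p)))"
    "\<And>p. p \<in> S01 \<Longrightarrow> cmod (cnj (expo m (snd p)) * complex_of_real (e (fst p)) / G (fst p)) \<le> \<bar>e (fst p)\<bar> / sqrt K"
proof -
  let ?h = "\<lambda>p::real\<times>real. cnj (expo m (snd p)) * complex_of_real (e (fst p)) / G (fst p)"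
  have hm: "?h \<in> borel_measurable borel" by (rule hm_measurable[OF em Gm])
  have nb: "\<And>p. p \<in> S01 \<Longrightarrow> (cmod (?h p))^2 \<le> (1 / K) * (e (fst p))^2"
  proof -
    fix p :: "real \<times> real" assume p: "p \<in> S01"
    then have u: "fst p \<in> {0..1}" unfolding S01_def by auto
    have ce: "cmod (expo m (snd p)) = 1" unfolding expo_def by simp
    have G0: "0 < (cmod (G (fst p)))^2" using Gb[OF u] K by linarith
    have "(cmod (?h p))^2 = (e (fst p))^2 / (cmod (G (fst p)))^2"
      by (simp add: norm_mult norm_divide ce power_divide)
    also have "\<dots> \<le> (e (fst p))^2 / K"
      by (rule divide_left_mono) (use Gb[OF u] K G0 in auto)
    finally show "(cmod (?h p))^2 \<le> (1 / K) * (e (fst p))^2" by simp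
  qed
  show "valid (\<lambda>p. Re (?h p))" unfolding valid_def
  proof
    show "(\<lambda>p. Re (?h p)) \<in> borel_measurable borel" using hm by measurable
    show "set_integrable lborel S01 (\<lambda>p. (Re (?h p))^2)"
    proof (rule sq_bound_int[OF em ei])
      show "(\<lambda>p. (Re (?h p))^2) \<in> borel_measurable borel" using hm by measurable
      fix p :: "real \<times> real" assume p: "p \<in> S01"
      have "(Re (?h p))^2 \<le> (cmod (?h p))^2" by (simp add: cmod_power2)
      then show "norm ((Re (?h p))^2) \<le> (1 / K) * (e (fst p))^2" using nb[OF p] by simp
    qed
  qed
  show "valid (\<lambda>p. Im (?h p))" unfolding valid_def
  proof
    show "(\<lambda>p. Im (?h p)) \<in> borel_measurable borel" using hm by measurable
    show "set_integrable lborel S01 (\<lambda>p. (Im (?h p))^2)"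
    proof (rule sq_bound_int[OF em ei])
      show "(\<lambda>p. (Im (?h p))^2) \<in> borel_measurable borel" using hm by measurable
      fix p :: "real \<times> real" assume p: "p \<in> S01"
      have "(Im (?h p))^2 \<le> (cmod (?h p))^2" by (simp add: cmod_power2)
      then show "norm ((Im (?h p))^2) \<le> (1 / K) * (e (fst p))^2" using nb[OF p] by simp
    qed
  qed
  fix p :: "real \<times> real" assume p: "p \<in> S01"
  have "cmod (?h p) = sqrt ((cmod (?h p))^2)" by simp
  also have "\<dots> \<le> sqrt ((1 / K) * (e (fst p))^2)" using nb[OF p] by (rule real_sqrt_le_mono)
  also have "\<dots> = \<bar>e (fst p)\<bar> / sqrt K" using K by (simp add: real_sqrt_mult real_sqrt_divide)
  finally show "cmod (?h p) \<le> \<bar>e (fst p)\<bar> / sqrt K" .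
qed

lemma fubini_H:
  fixes G :: "int \<Rightarrow> real \<Rightarrow> complex"
  assumes em: "e \<in> borel_measurable borel" and ei: "set_integrable lborel {0..1} (\<lambda>u. (e u)^2)"
    and W: "finite W"
    and Gm: "\<And>m. m \<in> W \<Longrightarrow> G m \<in> borel_measurable borel"
    and Gb: "\<And>m u. m \<in> W \<Longrightarrow> u \<in> {0..1} \<Longrightarrow> K m \<le> (cmod (G m u))^2"
    and K: "\<And>m. m \<in> W \<Longrightarrow> 0 < K m"
  shows "(LINT p:S01|lborel. (cmod (\<Sum>m\<in>W. a m * (cnj (expo m (snd p)) * complex_of_real (e (fst p)) / G m (fst p))))^2)
       = (LINT u:{0..1}|lborel. (e u)^2 * (\<Sum>m\<in>W. (cmod (a m))^2 / (cmod (G m u))^2))"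
proof -
  define h where "h m p = cnj (expo m (snd p)) * complex_of_real (e (fst p)) / G m (fst p)" for m and p :: "real \<times> real"
  define H where "H p = (\<Sum>m\<in>W. a m * h m p)" for p
  define f where "f p = (cmod (H p))^2" for p
  define V where "V u = (\<Sum>m\<in>W. (cmod (a m))^2 / (cmod (G m u))^2)" for u
  define S where "S = (\<Sum>m\<in>W. cmod (a m) / sqrt (K m))"
  have hb: "\<And>m p. m \<in> W \<Longrightarrow> p \<in> S01 \<Longrightarrow> cmod (h m p) \<le> \<bar>e (fst p)\<bar> / sqrt (K m)"
    unfolding h_def by (rule hm_valid(3)[OF em ei Gm Gb K]) auto
  have hmeas: "\<And>m. m \<in> W \<Longrightarrow> h m \<in> borel_measurable borel"
    unfolding h_def[abs_def] by (rule hm_measurable[OF em Gm])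
  have Hm: "H \<in> borel_measurable borel"
    unfolding H_def[abs_def] by (rule borel_measurable_sum) (auto intro!: borel_measurable_times measurable_const hmeas)
  have fm: "f \<in> borel_measurable borel" unfolding f_def[abs_def] using Hm by measurable
  have fi: "set_integrable lborel S01 f"
  proof (rule sq_bound_int[OF em ei fm])
    fix p :: "real \<times> real" assume p: "p \<in> S01"
    have "cmod (H p) \<le> (\<Sum>m\<in>W. cmod (a m * h m p))" unfolding H_def by (rule norm_sum)
    also have "\<dots> \<le> (\<Sum>m\<in>W. cmod (a m) * (\<bar>e (fst p)\<bar> / sqrt (K m)))"
      unfolding norm_mult by (intro sum_mono mult_left_mono hb p) simp_all
    also have "\<dots> = \<bar>e (fst p)\<bar> * S" unfolding S_def by (simp add: sum_distrib_left mult_ac)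
    finally have "cmod (H p) \<le> \<bar>e (fst p)\<bar> * S" .
    then have "(cmod (H p))^2 \<le> (\<bar>e (fst p)\<bar> * S)^2" by (rule power_mono) simp
    then show "norm (f p) \<le> S^2 * (e (fst p))^2" unfolding f_def by (simp add: power_mult_distrib mult_ac)
  qed
  let ?F = "\<lambda>p::real\<times>real. indicator S01 p *\<^sub>R f p"
  have PS: "pair_sigma_finite (lborel :: real measure) (lborel :: real measure)"
    by (simp add: pair_sigma_finite_def lborel.sigma_finite_measure_axioms)
  have Fi: "integrable (lborel \<Otimes>\<^sub>M lborel) ?F" using fi unfolding set_integrable_def lborel_prod .
  have "(LINT p:S01|lborel. f p) = integral\<^sup>L (lborel \<Otimes>\<^sub>M lborel) ?F"
    unfolding set_lebesgue_integral_def lborel_prod ..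
  also have "\<dots> = (\<integral>u. (\<integral>t. ?F (u, t) \<partial>lborel) \<partial>lborel)"
    by (rule pair_sigma_finite.integral_fst'[OF PS Fi, symmetric])
  also have "\<dots> = (\<integral>u. indicator {0..1} u *\<^sub>R ((e u)^2 * V u) \<partial>lborel)"
  proof (rule Bochner_Integration.integral_cong[OF refl])
    fix u :: real
    show "(\<integral>t. ?F (u, t) \<partial>lborel) = indicator {0..1} u *\<^sub>R ((e u)^2 * V u)"
    proof (cases "u \<in> {0..1}")
      case False
      then have z: "\<And>t. ?F (u, t) = 0" by (auto simp: S01_def indicator_def)
      have "(\<integral>t. ?F (u, t) \<partial>lborel) = (0::real)"
        by (simp only: z) simp
      then show ?thesis using False by simp
    next
      case True
      define d where "d m = cnj (a m * complex_of_real (e u) / G m u)" for m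
      have Hd: "\<And>t. H (u, t) = cnj (\<Sum>m\<in>W. d m * expo m t)"
        unfolding H_def h_def d_def by (simp add: cnj_sum mult_ac)
      have "(\<integral>t. ?F (u, t) \<partial>lborel) = (LINT t:{0..1}|lborel. (cmod (\<Sum>m\<in>W. d m * expo m t))^2)"
        unfolding set_lebesgue_integral_def f_def Hd complex_mod_cnj
        by (rule Bochner_Integration.integral_cong[OF refl]) (use True in \<open>auto simp: S01_def split: split_indicator\<close>)
      also have "\<dots> = (\<Sum>m\<in>W. (cmod (d m))^2)" by (rule parseval[OF W])
      also have "\<dots> = (e u)^2 * V u"
        unfolding V_def d_def by (simp add: sum_distrib_left norm_mult norm_divide power_divide power_mult_distrib mult_ac)
      finally show ?thesis using True by simp
    qed
  qed
  also have "\<dots> = (LINT u:{0..1}|lborel. (e u)^2 * V u)"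
    unfolding set_lebesgue_integral_def ..
  finally show ?thesis unfolding f_def H_def h_def V_def .
qed

lemma pw0: "((2::real)^j) powr (2*\<nu>) = 2 powr (2 * real j * \<nu>)"
proof -
  have "((2::real)^j) = 2 powr (real j)" by (simp add: powr_realpow)
  then show ?thesis by (simp add: powr_powr mult_ac)
qed

lemma pw1: "((2::real)^j/3) powr (2*\<nu>) = 3 powr (-2*\<nu>) * 2 powr (2 * real j * \<nu>)"
  by (simp add: powr_divide pw0 powr_minus_divide)

lemma pw2: "((2::real)^(j+2)/3) powr (2*\<nu>) = (4/3) powr (2*\<nu>) * 2 powr (2 * real j * \<nu>)"
proof -
  have "(2::real)^(j+2)/3 = 2^j * (4/3)" by (simp add: power_add)
  then have eq: "((2::real)^(j+2)/3) powr (2*\<nu>) = ((2::real)^j) powr (2*\<nu>) * (4/3) powr (2*\<nu>)"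
    by (simp only:) (rule powr_mult; simp)
  show ?thesis unfolding eq pw0 by (rule mult.commute)
qed

lemma inv_bounds:
  fixes x C :: real
  assumes x: "0 < x" and C: "0 < C" and nu: "0 < \<nu>"
  shows "1 / (C * x powr (- 2 * \<nu>)) = x powr (2 * \<nu>) / C"
  using x C by (simp add: powr_minus field_simps)

lemma V_bounds:
  fixes G :: "int \<Rightarrow> real \<Rightarrow> complex"
  assumes sub: "W \<subseteq> band j" and W: "finite W" and a1: "(\<Sum>m\<in>W. (cmod (a m))^2) = 1"
    and C: "0 < C1" "C1 \<le> C2" and nu: "0 < \<nu>"
    and gb: "\<And>m. m \<in> W \<Longrightarrow>
         C1 * \<bar>real_of_int m\<bar> powr (- 2 * \<nu>) \<le> (cmod (G m u))^2 \<and>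
         (cmod (G m u))^2 \<le> C2 * \<bar>real_of_int m\<bar> powr (- 2 * \<nu>)"
  shows "((2::real)^j/3) powr (2*\<nu>) / C2 \<le> (\<Sum>m\<in>W. (cmod (a m))^2 / (cmod (G m u))^2)"
    "(\<Sum>m\<in>W. (cmod (a m))^2 / (cmod (G m u))^2) \<le> ((2::real)^(j+2)/3) powr (2*\<nu>) / C1"
proof -
  let ?L = "((2::real)^j/3) powr (2*\<nu>) / C2" and ?U = "((2::real)^(j+2)/3) powr (2*\<nu>) / C1"
  have each: "?L \<le> 1 / (cmod (G m u))^2 \<and> 1 / (cmod (G m u))^2 \<le> ?U" if m: "m \<in> W" for m
  proof -
    define x where "x = \<bar>real_of_int m\<bar>"
    have xb: "2^j/3 \<le> x" "x \<le> 2^(j+2)/3" using sub m unfolding band_def x_def by auto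
    have x0: "0 < x" using xb(1) by (smt (verit) divide_pos_pos zero_less_power)
    have p0: "0 < x powr (- 2 * \<nu>)" using x0 by simp
    have g1: "C1 * x powr (- 2 * \<nu>) \<le> (cmod (G m u))^2" and g2: "(cmod (G m u))^2 \<le> C2 * x powr (- 2 * \<nu>)"
      using gb[OF m] unfolding x_def by auto
    have C2p: "0 < C2" using C by linarith
    have pos1: "0 < C1 * x powr (- 2 * \<nu>)" using C p0 by simp
    have G0: "0 < (cmod (G m u))^2" using pos1 g1 by linarith
    have "0 < C2 * x powr (- 2 * \<nu>) * (cmod (G m u))^2" using G0 C2p p0 by simp
    then have st: "1 / (C2 * x powr (- 2 * \<nu>)) \<le> 1 / (cmod (G m u))^2"
      by (intro divide_left_mono[OF g2]) auto
    have "?L \<le> x powr (2 * \<nu>) / C2"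
      by (intro divide_right_mono powr_mono2) (use xb nu C2p in auto)
    also have "\<dots> = 1 / (C2 * x powr (- 2 * \<nu>))" using inv_bounds[OF x0 C2p nu] by simp
    also note st
    finally have lo: "?L \<le> 1 / (cmod (G m u))^2" .
    have "0 < (cmod (G m u))^2 * (C1 * x powr (- 2 * \<nu>))" using G0 pos1 by simp
    then have "1 / (cmod (G m u))^2 \<le> 1 / (C1 * x powr (- 2 * \<nu>))"
      by (intro divide_left_mono[OF g1]) auto
    also have "\<dots> = x powr (2 * \<nu>) / C1" using inv_bounds[OF x0 C(1) nu] by simp
    also have "\<dots> \<le> ?U"
      by (intro divide_right_mono powr_mono2) (use xb nu C in auto)
    finally show ?thesis using lo by simp
  qed
  have "?L = (\<Sum>m\<in>W. (cmod (a m))^2 * ?L)" by (simp only: sum_distrib_right[symmetric] a1 mult_1)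
  also have "\<dots> \<le> (\<Sum>m\<in>W. (cmod (a m))^2 / (cmod (G m u))^2)"
  proof (rule sum_mono)
    fix m assume m: "m \<in> W"
    have "(cmod (a m))^2 * ?L \<le> (cmod (a m))^2 * (1 / (cmod (G m u))^2)"
      using each[OF m] by (intro mult_left_mono) auto
    then show "(cmod (a m))^2 * ?L \<le> (cmod (a m))^2 / (cmod (G m u))^2" by simp
  qed
  finally show "?L \<le> (\<Sum>m\<in>W. (cmod (a m))^2 / (cmod (G m u))^2)" .
  have "(\<Sum>m\<in>W. (cmod (a m))^2 / (cmod (G m u))^2) \<le> (\<Sum>m\<in>W. (cmod (a m))^2 * ?U)"
  proof (rule sum_mono)
    fix m assume m: "m \<in> W"
    have "(cmod (a m))^2 * (1 / (cmod (G m u))^2) \<le> (cmod (a m))^2 * ?U"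
      using each[OF m] by (intro mult_left_mono) auto
    then show "(cmod (a m))^2 / (cmod (G m u))^2 \<le> (cmod (a m))^2 * ?U" by simp
  qed
  also have "\<dots> = ?U" by (simp only: sum_distrib_right[symmetric] a1 mult_1)
  finally show "(\<Sum>m\<in>W. (cmod (a m))^2 / (cmod (G m u))^2) \<le> ?U" .
qed

theorem lemma1:
  fixes M :: "'w measure"
    and Z :: "((real \<times> real) \<Rightarrow> real) \<Rightarrow> 'w \<Rightarrow> real"
    and f g :: "real \<Rightarrow> real \<Rightarrow> real"
    and \<psi> \<eta> :: "nat \<Rightarrow> nat \<Rightarrow> real \<Rightarrow> real"
    and \<nu> C1 C2 :: real
  assumes noise: "white_noise M Z"
    and f_per: "periodic2 f" and g_per: "periodic2 g"
    and f_meas: "(\<lambda>p. f (fst p) (snd p)) \<in> borel_measurable borel"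
    and g_meas: "(\<lambda>p. g (fst p) (snd p)) \<in> borel_measurable borel"
    and psi: "meyer_type \<psi>"
    and eta: "daubechies_type \<eta>"
    and nu: "\<nu> > 0"
    and C: "0 < C1" "C1 \<le> C2"
    and g_bounds: "\<And>m u. m \<noteq> 0 \<Longrightarrow> u \<in> {0..1} \<Longrightarrow>
         C1 * \<bar>real_of_int m\<bar> powr (- 2 * \<nu>) \<le> (cmod (gcoef g m u))^2 \<and>
         (cmod (gcoef g m u))^2 \<le> C2 * \<bar>real_of_int m\<bar> powr (- 2 * \<nu>)"
  shows "\<exists>c1 c2. 0 < c1 \<and> 0 < c2 \<and>
           (\<forall>\<epsilon>>0. \<forall>j k j' k'. k < 2^j \<longrightarrow> k' < 2^j' \<longrightarrow>
              c1 * \<epsilon>^2 * 2 powr (2 * real j * \<nu>)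
                \<le> cvariance M (beta_tilde \<psi> \<eta> g f \<epsilon> Z j k j' k') \<and>
              cvariance M (beta_tilde \<psi> \<eta> g f \<epsilon> Z j k j' k')
                \<le> c2 * \<epsilon>^2 * 2 powr (2 * real j * \<nu>))"
proof -
  define c1 where "c1 = 3 powr (-2*\<nu>) / C2"
  define c2 where "c2 = (4/3) powr (2*\<nu>) / C1"
  have C2p: "0 < C2" using C by linarith
  have c1p: "0 < c1" unfolding c1_def using C2p by simp
  have c2p: "0 < c2" unfolding c2_def using C by simp
  have main: "\<epsilon>^2 * (((2::real)^j/3) powr (2*\<nu>) / C2) \<le> cvariance M (beta_tilde \<psi> \<eta> g f \<epsilon> Z j k j' k')
      \<and> cvariance M (beta_tilde \<psi> \<eta> g f \<epsilon> Z j k j' k') \<le> \<epsilon>^2 * (((2::real)^(j+2)/3) powr (2*\<nu>) / C1)"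
    if k: "k < 2^j" and k': "k' < 2^j'" for \<epsilon> j k j' k'
  proof -
    define e where "e = \<eta> j' k'"
    have onb: "orthonormal01 \<eta>" using eta unfolding daubechies_type_def by auto
    have em: "e \<in> borel_measurable borel" and ei: "set_integrable lborel {0..1} (\<lambda>u. (e u)^2)"
      using onb k' unfolding orthonormal01_def e_def by auto
    have e1: "(LINT u:{0..1}|lborel. (e u)^2) = 1"
      using onb k' unfolding orthonormal01_def e_def by (auto simp: power2_eq_square)
    define W where "W = Wset \<psi> j"
    have sub: "W \<subseteq> band j" and finW: "finite W"
      and a1': "(\<Sum>m\<in>W. (cmod (psi_coef \<psi> j k m))^2) = 1"
      using psi_facts[OF psi k] unfolding W_def by auto
    define a where "a m = cnj (psi_coef \<psi> j k m)" for m
    have a1: "(\<Sum>m\<in>W. (cmod (a m))^2) = 1" unfolding a_def complex_mod_cnj by (rule a1')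
    have m0: "m \<noteq> 0" if "m \<in> W" for m
    proof
      assume "m = 0"
      with sub that have "(2::real)^j / 3 \<le> 0" unfolding band_def by auto
      then show False by (smt (verit) divide_pos_pos zero_less_power)
    qed
    define K where "K m = C1 * \<bar>real_of_int m\<bar> powr (- 2 * \<nu>)" for m
    have Kpos: "0 < K m" if "m \<in> W" for m
      unfolding K_def using C m0[OF that] by simp
    have Gb: "K m \<le> (cmod (gcoef g m u))^2" if "m \<in> W" "u \<in> {0..1}" for m u
      unfolding K_def using g_bounds[OF m0[OF that(1)] that(2)] by simp
    have Gm: "gcoef g m \<in> borel_measurable borel" for m
      using gcoef_measurable[OF g_meas] by simp
    define h where "h m = (\<lambda>p. cnj (expo m (snd p)) * complex_of_real (e (fst p)) / gcoef g m (fst p))" for m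
    have vR: "valid (\<lambda>p. Re (h m p))" and vI: "valid (\<lambda>p. Im (h m p))" if "m \<in> W" for m
      unfolding h_def using hm_valid(1,2)[OF em ei Gm Gb[OF that] Kpos[OF that]] by auto
    define Cs where "Cs m = (LINT p:S01|lborel. complex_of_real (conv_signal g f (fst p) (snd p)) * h m p)" for m
    have Xeq: "beta_tilde \<psi> \<eta> g f \<epsilon> Z j k j' k' \<omega> = (\<Sum>m\<in>W. a m * (Cs m + complex_of_real \<epsilon> * wn_int Z (h m) \<omega>))" for \<omega>
      unfolding beta_tilde_def obs_int_def W_def a_def Cs_def h_def e_def ..
    have var: "cvariance M (beta_tilde \<psi> \<eta> g f \<epsilon> Z j k j' k') = \<epsilon>^2 * (LINT p:S01|lborel. (cmod (\<Sum>m\<in>W. a m * h m p))^2)"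
      by (rule var_core[OF noise finW vR vI Xeq])
    define V where "V u = (\<Sum>m\<in>W. (cmod (a m))^2 / (cmod (gcoef g m u))^2)" for u
    have Q: "(LINT p:S01|lborel. (cmod (\<Sum>m\<in>W. a m * h m p))^2) = (LINT u:{0..1}|lborel. (e u)^2 * V u)"
      unfolding h_def V_def by (rule fubini_H[OF em ei finW Gm Gb Kpos])
    let ?L = "((2::real)^j/3) powr (2*\<nu>) / C2" and ?U = "((2::real)^(j+2)/3) powr (2*\<nu>) / C1"
    have gb: "C1 * \<bar>real_of_int m\<bar> powr (- 2 * \<nu>) \<le> (cmod (gcoef g m u))^2 \<and>
         (cmod (gcoef g m u))^2 \<le> C2 * \<bar>real_of_int m\<bar> powr (- 2 * \<nu>)" if "m \<in> W" "u \<in> {0..1}" for m u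
      using g_bounds[OF m0[OF that(1)] that(2)] .
    have Vb: "?L \<le> V u \<and> V u \<le> ?U" if u: "u \<in> {0..1}" for u
      unfolding V_def using V_bounds[OF sub finW a1 C nu, of "gcoef g" u] gb[OF _ u] by auto
    have Vm: "V \<in> borel_measurable borel"
      unfolding V_def[abs_def] by (rule borel_measurable_sum) (use Gm in measurable)
    have Up: "0 \<le> ?U" using C by simp
    have Lp: "0 \<le> ?L" using C2p by simp
    have iU: "set_integrable lborel {0..1} (\<lambda>u. ?U * (e u)^2)" using ei by simp
    have iL: "set_integrable lborel {0..1} (\<lambda>u. ?L * (e u)^2)" using ei by simp
    have iV: "set_integrable lborel {0..1} (\<lambda>u. (e u)^2 * V u)"
      unfolding set_integrable_def
    proof (rule Bochner_Integration.integrable_bound[OF iU[unfolded set_integrable_def]])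
      show "(\<lambda>u. indicator {0..1} u *\<^sub>R ((e u)^2 * V u)) \<in> borel_measurable lborel"
        using em Vm by simp measurable
      show "AE u in lborel. norm (indicator {0..1} u *\<^sub>R ((e u)^2 * V u)) \<le> norm (indicator {0..1} u *\<^sub>R (?U * (e u)^2))"
      proof (rule AE_I2)
        fix u :: real
        show "norm (indicator {0..1} u *\<^sub>R ((e u)^2 * V u)) \<le> norm (indicator {0..1} u *\<^sub>R (?U * (e u)^2))"
        proof (cases "u \<in> {0..1}")
          case True
          have V0: "0 \<le> V u" using Vb[OF True] Lp by linarith
          have "(e u)^2 * V u \<le> (e u)^2 * ?U" using Vb[OF True] by (intro mult_left_mono) auto
          then have "\<bar>(e u)^2 * V u\<bar> \<le> \<bar>?U * (e u)^2\<bar>"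
            using V0 Up C(1) by (simp add: mult.commute)
          then show ?thesis using True by simp
        qed simp
      qed
    qed
    have lo: "?L \<le> (LINT u:{0..1}|lborel. (e u)^2 * V u)"
    proof -
      have "?L = (LINT u:{0..1}|lborel. ?L * (e u)^2)" using e1 by simp
      also have "\<dots> \<le> (LINT u:{0..1}|lborel. (e u)^2 * V u)"
      proof (rule set_integral_mono[OF iL iV])
        fix u :: real assume u: "u \<in> {0..1}"
        have "(e u)^2 * ?L \<le> (e u)^2 * V u" using Vb[OF u] by (intro mult_left_mono) auto
        then show "?L * (e u)^2 \<le> (e u)^2 * V u" by (simp only: mult.commute)
      qed
      finally show ?thesis .
    qed
    have hi: "(LINT u:{0..1}|lborel. (e u)^2 * V u) \<le> ?U"
    proof -
      have "(LINT u:{0..1}|lborel. (e u)^2 * V u) \<le> (LINT u:{0..1}|lborel. ?U * (e u)^2)"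
      proof (rule set_integral_mono[OF iV iU])
        fix u :: real assume u: "u \<in> {0..1}"
        have "(e u)^2 * V u \<le> (e u)^2 * ?U" using Vb[OF u] by (intro mult_left_mono) auto
        then show "(e u)^2 * V u \<le> ?U * (e u)^2" by (simp only: mult.commute)
      qed
      also have "\<dots> = ?U" using e1 by simp
      finally show ?thesis .
    qed
    have ep: "0 \<le> \<epsilon>^2" by simp
    show ?thesis unfolding var Q using mult_left_mono[OF lo ep] mult_left_mono[OF hi ep] by simp
  qed
  show ?thesis
  proof (intro exI conjI allI impI)
    show "0 < c1" "0 < c2" by (fact c1p c2p)+
    fix \<epsilon> :: real and j k j' k' :: nat
    assume "0 < \<epsilon>" "k < 2^j" "k' < 2^j'"
    note mm = main[OF \<open>k < 2^j\<close> \<open>k' < 2^j'\<close>, of \<epsilon>]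
    have "c1 * \<epsilon>^2 * 2 powr (2 * real j * \<nu>) = \<epsilon>^2 * (((2::real)^j/3) powr (2*\<nu>) / C2)"
      unfolding pw1 c1_def by simp
    then show "c1 * \<epsilon>^2 * 2 powr (2 * real j * \<nu>) \<le> cvariance M (beta_tilde \<psi> \<eta> g f \<epsilon> Z j k j' k')"
      using mm by simp
    have "c2 * \<epsilon>^2 * 2 powr (2 * real j * \<nu>) = \<epsilon>^2 * (((2::real)^(j+2)/3) powr (2*\<nu>) / C1)"
      unfolding pw2 c2_def by simp
    then show "cvariance M (beta_tilde \<psi> \<eta> g f \<epsilon> Z j k j' k') \<le> c2 * \<epsilon>^2 * 2 powr (2 * real j * \<nu>)"
      using mm by simp
  qed
qed

end
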